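(* Let $C_1,\ldots,C_n\in\mathcal{C}^\infty(T^*\mathbb{R}^N)$ be symbols. Then, with $\star$ the Moyal product, $$C_1\star\cdots\star C_n=\sum_{k=0}^{\infty}\frac{1}{k!}\left(\frac{i\hbar}{2}\right)^k\sum_{\substack{\Gamma\text{ labeled graph with}\\ n\text{ vertices and }k\text{ edges}}}\lambda_\Gamma(C_1,\ldots,C_n).$$
   Context: Use coordinates $(z^1,\ldots,z^{2N})=(x_1,\ldots,x_N,p_1,\ldots,p_N)$ on $T^*\mathbb{R}^N$, and let $J^{\mu\nu}$ be the entries of the matrix $\begin{pmatrix}0&I_N\\-I_N&0\end{pmatrix}$. Write $C_{,\mu_1\ldots\mu_k}=\partial^kC/\partial z^{\mu_1}\cdots\partial z^{\mu_k}$ and use summation over repeated indices. $\hbar$ is a formal parameter. The Moyal product is $C\star D=\sum_{k\ge0}\frac1{k!}(\frac{i\hbar}{2})^k\{C,D\}_k$ with $\{C,D\}_0=CD$ and $\{C,D\}_k=C_{,\mu_1\ldots\mu_k}J^{\mu_1\nu_1}\cdots J^{\mu_k\nu_k}D_{,\nu_1\ldots\nu_k}$. A labeled graph with $V$ vertices and $E$ edges is a map $s:\{1,\ldots,E\}\to\mathcal{P}_2\{1,\ldots,V\}$ ($\mathcal P_2X$ = 2-element subsets of $X$); edge $e$ joins the vertices in $s(e)$ (multiple edges allowed, no self-edges). Each edge $e$ with $s(e)=\{i,j\}$, $i<j$, is oriented from its tail $i$ to its head $j$. Given symbols $C_1,\ldots,C_V$, $\lambda_\Gamma(C_1,\ldots,C_V)$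 is the function obtained by attaching to each edge $e$ a pair of indices $(\mu_e,\nu_e)$ and a factor $J^{\mu_e\nu_e}$, and to each vertex $v$ the function $C_v$ differentiated by $\partial_{z^{\mu_e}}$ for every edge $e$ with tail $v$ and by $\partial_{z^{\nu_e}}$ for every edge $e$ with head $v$; then multiplying all these factors and summing over all indices. (E.g. for the graph with one edge $1\to2$ and two edges $2\to3$: $\lambda=C_{1,\mu_1}J^{\mu_1\nu_1}C_{2,\nu_1\mu_2\mu_3}J^{\mu_2\nu_2}J^{\mu_3\nu_3}C_{3,\nu_2\nu_3}$.) *)

theory Defs
  imports "HOL-Analysis.Analysis" "HOL-Library.FuncSet"
begin

text \<open>Phase space T^*R^N = R^{2N}, coordinates indexed by 'n + 'n:
  Inl i is x_i, Inr i is p_i. Symbols are complex-valued functions.\<close>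

type_synonym 'n sym = "real ^ ('n + 'n) \<Rightarrow> complex"

fun Jm :: "('n + 'n) \<Rightarrow> ('n + 'n) \<Rightarrow> complex" where
  "Jm (Inl i) (Inr j) = (if i = j then 1 else 0)"
| "Jm (Inr i) (Inl j) = (if i = j then -1 else 0)"
| "Jm _ _ = 0"

definition pd :: "('n::finite + 'n) \<Rightarrow> 'n sym \<Rightarrow> 'n sym" where
  "pd mu f = (\<lambda>z. vector_derivative (\<lambda>t::real. f (z + t *\<^sub>R axis mu 1)) (at 0))"

definition pds :: "('n::finite + 'n) list \<Rightarrow> 'n sym \<Rightarrow> 'n sym" where
  "pds mus f = foldr pd mus f"

definition smooth_sym :: "'n::finite sym \<Rightarrow> bool" where
  "smooth_sym f \<longleftrightarrow> (\<forall>mus z. pds mus f differentiable (at z))"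

definition bracket :: "nat \<Rightarrow> 'n::finite sym \<Rightarrow> 'n sym \<Rightarrow> 'n sym" where
  "bracket k C D = (\<lambda>z. \<Sum>mu\<in>{1..k} \<rightarrow>\<^sub>E UNIV. \<Sum>nu\<in>{1..k} \<rightarrow>\<^sub>E UNIV.
      (\<Prod>e\<in>{1..k}. Jm (mu e) (nu e))
      * pds (map mu [1..<k+1]) C z * pds (map nu [1..<k+1]) D z)"

text \<open>Formal power series in hbar with symbol coefficients: A m is the coefficient of hbar^m.\<close>
type_synonym 'n hseries = "nat \<Rightarrow> 'n sym"

definition const_series :: "'n sym \<Rightarrow> 'n hseries" where
  "const_series C = (\<lambda>m. if m = 0 then C else (\<lambda>_. 0))"

text \<open>Moyal product extended hbar-bilinearly to formal series:
  A \<star> B = \<Sum>_k 1/k! (i hbar/2)^k {A,B}_k.\<close>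
definition moyal :: "'n::finite hseries \<Rightarrow> 'n hseries \<Rightarrow> 'n hseries" where
  "moyal A B = (\<lambda>m z. \<Sum>k\<le>m. \<Sum>a\<le>m - k.
      (\<i> / 2) ^ k / of_nat (fact k) * bracket k (A a) (B (m - k - a)) z)"

fun moyal_list :: "nat \<Rightarrow> (nat \<Rightarrow> 'n::finite sym) \<Rightarrow> 'n hseries" where
  "moyal_list 0 C = const_series (\<lambda>_. 1)"
| "moyal_list (Suc 0) C = const_series (C 1)"
| "moyal_list (Suc (Suc n)) C = moyal (moyal_list (Suc n) C) (const_series (C (Suc (Suc n))))"

definition graphs :: "nat \<Rightarrow> nat \<Rightarrow> (nat \<Rightarrow> nat set) set" where
  "graphs V E = {1..E} \<rightarrow>\<^sub>E {A. A \<subseteq> {1..V} \<and> card A = 2}"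

text \<open>Derivative indices at vertex v, in edge order: mu_e if v is the tail (min) of e,
  nu_e if v is the head (max) of e.\<close>
definition vertex_indices :: "nat \<Rightarrow> (nat \<Rightarrow> nat set) \<Rightarrow> (nat \<Rightarrow> 'a) \<Rightarrow> (nat \<Rightarrow> 'a) \<Rightarrow> nat \<Rightarrow> 'a list" where
  "vertex_indices E s mu nu v = concat (map (\<lambda>e.
      (if Min (s e) = v then [mu e] else []) @ (if Max (s e) = v then [nu e] else [])) [1..<E+1])"

definition lambda_graph :: "nat \<Rightarrow> nat \<Rightarrow> (nat \<Rightarrow> nat set) \<Rightarrow> (nat \<Rightarrow> 'n::finite sym) \<Rightarrow> 'n sym" where
  "lambda_graph V E s C = (\<lambda>z. \<Sum>mu\<in>{1..E} \<rightarrow>\<^sub>E UNIV. \<Sum>nu\<in>{1..E} \<rightarrow>\<^sub>E UNIV.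
      (\<Prod>e\<in>{1..E}. Jm (mu e) (nu e)) * (\<Prod>v\<in>{1..V}. pds (vertex_indices E s mu nu v) (C v) z))"

end

theory Submission
  imports Defs
begin

lemma hvd:
  fixes f :: "'n::finite sym"
  assumes "(f has_derivative f') (at (w + s0 *\<^sub>R u))"
  shows "((\<lambda>s. f (w + s *\<^sub>R u)) has_vector_derivative f' u) (at s0)"
proof -
  have l: "linear f'" using assms has_derivative_linear by blast
  have "((\<lambda>s. w + s *\<^sub>R u) has_derivative (\<lambda>s. s *\<^sub>R u)) (at s0)"
    by (auto intro!: derivative_eq_intros)
  from has_derivative_compose[OF this assms]
  have "((\<lambda>s. f (w + s *\<^sub>R u)) has_derivative (\<lambda>s. f' (s *\<^sub>R u))) (at s0)" .
  moreover have "(\<lambda>s. f' (s *\<^sub>R u)) = (\<lambda>s. s *\<^sub>R f' u)"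
    using l by (simp add: linear_cmul)
  ultimately show ?thesis unfolding has_vector_derivative_def by simp
qed

lemma pd_eq:
  fixes f :: "'n::finite sym"
  assumes "(f has_derivative f') (at y)"
  shows "pd m f y = f' (axis m 1)"
proof -
  have "((\<lambda>s. f (y + s *\<^sub>R axis m 1)) has_vector_derivative f' (axis m 1)) (at 0)"
    by (rule hvd) (use assms in simp)
  then show ?thesis unfolding pd_def by (rule vector_derivative_at)
qed

lemma pd_add:
  fixes f g :: "'n::finite sym"
  assumes "f differentiable (at y)" "g differentiable (at y)"
  shows "pd m (\<lambda>z. f z + g z) y = pd m f y + pd m g y"
proof -
  obtain f' g' where f: "(f has_derivative f') (at y)" and g: "(g has_derivative g') (at y)"
    using assms unfolding differentiable_def by blast
  show ?thesis using pd_eq[OF f] pd_eq[OF g] pd_eq[OF has_derivative_add[OF f g]] by simp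
qed

lemma pd_mult:
  fixes f g :: "'n::finite sym"
  assumes "f differentiable (at y)" "g differentiable (at y)"
  shows "pd m (\<lambda>z. f z * g z) y = pd m f y * g y + f y * pd m g y"
proof -
  obtain f' g' where f: "(f has_derivative f') (at y)" and g: "(g has_derivative g') (at y)"
    using assms unfolding differentiable_def by blast
  show ?thesis using pd_eq[OF f] pd_eq[OF g] pd_eq[OF has_derivative_mult[OF f g]] by simp
qed

lemma pd_const: "pd m (\<lambda>z. c) = (\<lambda>z. 0)"
  unfolding pd_def by simp

lemma pds_const0: "pds l (\<lambda>z. 0) = (\<lambda>z. 0)"
  unfolding pds_def by (induction l) (simp_all add: pd_const)

lemma pds_Cons: "pds (m # l) f = pd m (pds l f)"
  unfolding pds_def by simp

lemma pds_Nil: "pds [] f = f"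
  unfolding pds_def by simp

lemma pds_append: "pds (a @ b) f = pds a (pds b f)"
  unfolding pds_def by simp

lemma smooth_diff: "smooth_sym f \<Longrightarrow> f differentiable (at z)"
  unfolding smooth_sym_def by (metis pds_Nil)

lemma smooth_pds: "smooth_sym f \<Longrightarrow> smooth_sym (pds l f)"
  unfolding smooth_sym_def by (metis pds_append)

lemma smooth_pd: "smooth_sym f \<Longrightarrow> smooth_sym (pd m f)"
  using smooth_pds[of f "[m]"] by (simp add: pds_Cons pds_Nil)


inductive alg :: "'n::finite sym \<Rightarrow> bool" where
  "smooth_sym f \<Longrightarrow> alg f"
| "alg (\<lambda>z. c)"
| "alg f \<Longrightarrow> alg g \<Longrightarrow> alg (\<lambda>z. f z + g z)"
| "alg f \<Longrightarrow> alg g \<Longrightarrow> alg (\<lambda>z. f z * g z)"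

lemma alg_diff: "alg f \<Longrightarrow> f differentiable (at z)"
  by (induction rule: alg.induct) (auto simp: smooth_diff)

lemma alg_pd: "alg f \<Longrightarrow> alg (pd m f)"
proof (induction rule: alg.induct)
  case (1 f) then show ?case by (simp add: smooth_pd alg.intros)
next
  case (2 c) then show ?case by (simp add: pd_const alg.intros)
next
  case (3 f g)
  have "pd m (\<lambda>z. f z + g z) = (\<lambda>z. pd m f z + pd m g z)"
    using 3 by (simp add: fun_eq_iff pd_add alg_diff)
  then show ?case using 3 by (simp add: alg.intros)
next
  case (4 f g)
  have "pd m (\<lambda>z. f z * g z) = (\<lambda>z. pd m f z * g z + f z * pd m g z)"
    using 4 by (simp add: fun_eq_iff pd_mult alg_diff)
  then show ?case using 4 by (simp add: alg.intros)
qed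

lemma alg_pds: "alg f \<Longrightarrow> alg (pds l f)"
  by (induction l) (simp_all add: pds_Nil pds_Cons alg_pd)

lemma alg_smooth: "alg f \<Longrightarrow> smooth_sym f"
  unfolding smooth_sym_def using alg_pds alg_diff by blast

lemma smooth_add: "smooth_sym f \<Longrightarrow> smooth_sym g \<Longrightarrow> smooth_sym (\<lambda>z. f z + g z)"
  by (rule alg_smooth, rule alg.intros(3)) (rule alg.intros(1), assumption)+
lemma smooth_mult: "smooth_sym f \<Longrightarrow> smooth_sym g \<Longrightarrow> smooth_sym (\<lambda>z. f z * g z)"
  by (rule alg_smooth, rule alg.intros(4)) (rule alg.intros(1), assumption)+
lemma smooth_const: "smooth_sym (\<lambda>z. c)"
  by (rule alg_smooth, rule alg.intros(2))
lemma smooth_cmult: "smooth_sym f \<Longrightarrow> smooth_sym (\<lambda>z. c * f z)"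
  by (rule alg_smooth, rule alg.intros(4), rule alg.intros(2), rule alg.intros(1), assumption)

lemma smooth_sum: "finite I \<Longrightarrow> (\<And>i. i \<in> I \<Longrightarrow> smooth_sym (F i)) \<Longrightarrow> smooth_sym (\<lambda>z. \<Sum>i\<in>I. F i z)"
  by (induction I rule: finite_induct) (simp_all add: smooth_const smooth_add)

lemma smooth_prod: "finite I \<Longrightarrow> (\<And>i. i \<in> I \<Longrightarrow> smooth_sym (F i)) \<Longrightarrow> smooth_sym (\<lambda>z. \<Prod>i\<in>I. F i z)"
  by (induction I rule: finite_induct) (simp_all add: smooth_const smooth_mult)


lemma pd_cmult: "f differentiable (at y) \<Longrightarrow> pd m (\<lambda>z. c * f z) y = c * pd m f y"
  using pd_mult[of "\<lambda>z. c" y f m] by (simp add: pd_const)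

lemma pds_add: "smooth_sym f \<Longrightarrow> smooth_sym g \<Longrightarrow> pds l (\<lambda>z. f z + g z) = (\<lambda>z. pds l f z + pds l g z)"
proof (induction l)
  case Nil then show ?case by (simp add: pds_Nil)
next
  case (Cons a l)
  then have "pds (a # l) (\<lambda>z. f z + g z) = pd a (\<lambda>z. pds l f z + pds l g z)"
    by (simp add: pds_Cons)
  also have "\<dots> = (\<lambda>z. pd a (pds l f) z + pd a (pds l g) z)"
    using Cons.prems by (intro ext pd_add smooth_diff smooth_pds)
  finally show ?case by (simp add: pds_Cons)
qed

lemma pds_cmult: "smooth_sym f \<Longrightarrow> pds l (\<lambda>z. c * f z) = (\<lambda>z. c * pds l f z)"
proof (induction l)
  case Nil then show ?case by (simp add: pds_Nil)
next
  case (Cons a l)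
  then have "pds (a # l) (\<lambda>z. c * f z) = pd a (\<lambda>z. c * pds l f z)"
    by (simp add: pds_Cons)
  also have "\<dots> = (\<lambda>z. c * pd a (pds l f) z)"
    using Cons.prems by (intro ext pd_cmult smooth_diff smooth_pds)
  finally show ?case by (simp add: pds_Cons)
qed

lemma pds_sum: "finite I \<Longrightarrow> (\<And>i. i \<in> I \<Longrightarrow> smooth_sym (F i)) \<Longrightarrow>
   pds l (\<lambda>z. \<Sum>i\<in>I. F i z) = (\<lambda>z. \<Sum>i\<in>I. pds l (F i) z)"
proof (induction I rule: finite_induct)
  case empty then show ?case by (simp add: pds_const0)
next
  case (insert a I)
  then show ?case by (simp add: pds_add smooth_sum)
qed

lemma diff_prod: fixes F :: "_ \<Rightarrow> 'n::finite sym" shows "finite V \<Longrightarrow> (\<And>v. v \<in> V \<Longrightarrow> F v differentiable (at y)) \<Longrightarrow>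
  (\<lambda>z. \<Prod>v\<in>V. F v z) differentiable (at y)"
proof (induction V rule: finite_induct)
  case empty then show ?case by simp
next
  case (insert a V)
  have "F a differentiable at y" using insert.prems by auto
  moreover have "(\<lambda>z. \<Prod>v\<in>V. F v z) differentiable at y" using insert by auto
  ultimately have "(\<lambda>z. F a z * (\<Prod>v\<in>V. F v z)) differentiable at y" by (rule differentiable_mult)
  then show ?case using insert.hyps by simp
qed

lemma pd_prod: "finite V \<Longrightarrow> (\<And>v. v \<in> V \<Longrightarrow> F v differentiable (at y)) \<Longrightarrow>
  pd m (\<lambda>z. \<Prod>v\<in>V. F v z) y = (\<Sum>w\<in>V. \<Prod>v\<in>V. (if v = w then pd m (F v) y else F v y))"
proof (induction V rule: finite_induct)
  case empty then show ?case by (simp add: pd_const)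
next
  case (insert a V)
  have d: "(\<lambda>z. \<Prod>v\<in>V. F v z) differentiable (at y)"
    using insert by (intro diff_prod) auto
  have "pd m (\<lambda>z. \<Prod>v\<in>insert a V. F v z) y = pd m (\<lambda>z. F a z * (\<Prod>v\<in>V. F v z)) y"
    using insert by simp
  also have "\<dots> = pd m (F a) y * (\<Prod>v\<in>V. F v y) + F a y * pd m (\<lambda>z. \<Prod>v\<in>V. F v z) y"
    using insert d by (intro pd_mult) auto
  also have "\<dots> = (\<Sum>w\<in>insert a V. \<Prod>v\<in>insert a V. (if v = w then pd m (F v) y else F v y))"
  proof -
    let ?h = "\<lambda>w v. (if v = w then pd m (F v) y else F v y)"
    have 1: "(\<Prod>v\<in>insert a V. ?h a v) = pd m (F a) y * (\<Prod>v\<in>V. F v y)"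
    proof -
      have "(\<Prod>v\<in>V. ?h a v) = (\<Prod>v\<in>V. F v y)"
        using insert(2) by (intro prod.cong) auto
      then show ?thesis using insert(1,2) by simp
    qed
    have 2: "(\<Prod>v\<in>insert a V. ?h w v) = F a y * (\<Prod>v\<in>V. ?h w v)" if "w \<in> V" for w
      using insert(1,2) that by (simp add: prod.insert) (metis)
    have "(\<Sum>w\<in>insert a V. \<Prod>v\<in>insert a V. ?h w v)
       = (\<Prod>v\<in>insert a V. ?h a v) + (\<Sum>w\<in>V. \<Prod>v\<in>insert a V. ?h w v)"
      using insert.hyps by (subst sum.insert) auto
    also have "\<dots> = pd m (F a) y * (\<Prod>v\<in>V. F v y) + (\<Sum>w\<in>V. F a y * (\<Prod>v\<in>V. ?h w v))"
      using 1 2 by simp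
    also have "\<dots> = pd m (F a) y * (\<Prod>v\<in>V. F v y) + F a y * pd m (\<lambda>z. \<Prod>v\<in>V. F v z) y"
      using insert by (simp add: sum_distrib_left)
    finally show ?thesis by simp

  qed
  finally show ?case .
qed



lemma hrd:
  fixes g :: "'n::finite sym" and L :: "complex \<Rightarrow> real"
  assumes "g differentiable (at (w + s0 *\<^sub>R axis m 1))" and L: "bounded_linear L"
  shows "((\<lambda>s. L (g (w + s *\<^sub>R axis m 1))) has_real_derivative L (pd m g (w + s0 *\<^sub>R axis m 1))) (at s0)"
proof -
  obtain g' where G: "(g has_derivative g') (at (w + s0 *\<^sub>R axis m 1))"
    using assms(1) unfolding differentiable_def by blast
  have "((\<lambda>s. g (w + s *\<^sub>R axis m 1)) has_vector_derivative g' (axis m 1)) (at s0)"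
    by (rule hvd[OF G])
  then have "((\<lambda>s. L (g (w + s *\<^sub>R axis m 1))) has_vector_derivative L (g' (axis m 1))) (at s0)"
    by (rule bounded_linear.has_vector_derivative[OF L])
  moreover have "pd m g (w + s0 *\<^sub>R axis m 1) = g' (axis m 1)" by (rule pd_eq[OF G])
  ultimately show ?thesis by (simp add: has_real_derivative_iff_has_vector_derivative)
qed

lemma mvt0:
  fixes \<phi> :: "real \<Rightarrow> real"
  assumes "0 < t" "\<And>s. (\<phi> has_real_derivative \<phi>' s) (at s)"
  shows "\<exists>\<sigma>. 0 < \<sigma> \<and> \<sigma> < t \<and> \<phi> t - \<phi> 0 = t * \<phi>' \<sigma>"
  using MVT2[of 0 t \<phi> \<phi>'] assms by auto

lemma key:
  fixes f :: "'n::finite sym" and L :: "complex \<Rightarrow> real"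
  assumes sm: "smooth_sym f" and L: "bounded_linear L" and t: "0 < t"
  shows "\<exists>\<sigma> \<tau>. 0 < \<sigma> \<and> \<sigma> < t \<and> 0 < \<tau> \<and> \<tau> < t \<and>
    L (f (z + t *\<^sub>R axis a 1 + t *\<^sub>R axis b 1)) - L (f (z + t *\<^sub>R axis a 1))
      - L (f (z + t *\<^sub>R axis b 1)) + L (f z)
    = t * t * L (pd b (pd a f) (z + \<sigma> *\<^sub>R axis a 1 + \<tau> *\<^sub>R axis b 1))"
proof -
  define ua :: "real ^ ('n + 'n)" where "ua = axis a 1"
  define ub :: "real ^ ('n + 'n)" where "ub = axis b 1"
  define \<phi> where "\<phi> s = L (f ((z + t *\<^sub>R ub) + s *\<^sub>R ua)) - L (f (z + s *\<^sub>R ua))" for s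
  have d\<phi>: "(\<phi> has_real_derivative
      (L (pd a f ((z + t *\<^sub>R ub) + s *\<^sub>R ua)) - L (pd a f (z + s *\<^sub>R ua)))) (at s)" for s
    unfolding \<phi>_def ua_def
    by (intro DERIV_diff hrd L smooth_diff sm)
  obtain \<sigma> where \<sigma>: "0 < \<sigma>" "\<sigma> < t"
    and e1: "\<phi> t - \<phi> 0 = t * (L (pd a f ((z + t *\<^sub>R ub) + \<sigma> *\<^sub>R ua)) - L (pd a f (z + \<sigma> *\<^sub>R ua)))"
    using mvt0[OF t d\<phi>] by blast
  define \<psi> where "\<psi> s = L (pd a f ((z + \<sigma> *\<^sub>R ua) + s *\<^sub>R ub))" for s
  have d\<psi>: "(\<psi> has_real_derivative L (pd b (pd a f) ((z + \<sigma> *\<^sub>R ua) + s *\<^sub>R ub))) (at s)" for s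
    unfolding \<psi>_def ub_def
    by (intro hrd L smooth_diff smooth_pd sm)
  obtain \<tau> where \<tau>: "0 < \<tau>" "\<tau> < t"
    and e2: "\<psi> t - \<psi> 0 = t * L (pd b (pd a f) ((z + \<sigma> *\<^sub>R ua) + \<tau> *\<^sub>R ub))"
    using mvt0[OF t d\<psi>] by blast
  have "\<psi> t = L (pd a f ((z + t *\<^sub>R ub) + \<sigma> *\<^sub>R ua))" "\<psi> 0 = L (pd a f (z + \<sigma> *\<^sub>R ua))"
    unfolding \<psi>_def by (simp_all add: algebra_simps)
  then have "\<phi> t - \<phi> 0 = t * t * L (pd b (pd a f) (z + \<sigma> *\<^sub>R ua + \<tau> *\<^sub>R ub))"
    using e1 e2 by simp
  moreover have "\<phi> t - \<phi> 0 = L (f (z + t *\<^sub>R ua + t *\<^sub>R ub)) - L (f (z + t *\<^sub>R ua))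
      - L (f (z + t *\<^sub>R ub)) + L (f z)"
    unfolding \<phi>_def by (simp add: algebra_simps)
  ultimately show ?thesis using \<sigma> \<tau> unfolding ua_def ub_def by metis
qed

lemma pd_swap_L:
  fixes f :: "'n::finite sym" and L :: "complex \<Rightarrow> real"
  assumes sm: "smooth_sym f" and L: "bounded_linear L"
  shows "L (pd b (pd a f) z) = L (pd a (pd b f) z)"
proof (rule ccontr)
  assume ne: "L (pd b (pd a f) z) \<noteq> L (pd a (pd b f) z)"
  define X where "X w = L (pd b (pd a f) w)" for w
  define Y where "Y w = L (pd a (pd b f) w)" for w
  define e where "e = \<bar>X z - Y z\<bar> / 2"
  have e: "e > 0" using ne unfolding e_def X_def Y_def by simp
  have cX: "isCont X z" unfolding X_def
    by (intro bounded_linear.isCont[OF L] differentiable_imp_continuous_within smooth_diff smooth_pd sm)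
  have cY: "isCont Y z" unfolding Y_def
    by (intro bounded_linear.isCont[OF L] differentiable_imp_continuous_within smooth_diff smooth_pd sm)
  obtain d1 where d1: "d1 > 0" "\<And>w. dist w z < d1 \<Longrightarrow> dist (X w) (X z) < e"
    using cX e unfolding continuous_at_eps_delta by blast
  obtain d2 where d2: "d2 > 0" "\<And>w. dist w z < d2 \<Longrightarrow> dist (Y w) (Y z) < e"
    using cY e unfolding continuous_at_eps_delta by blast
  define t where "t = min d1 d2 / 4"
  have t: "t > 0" using d1 d2 unfolding t_def by simp
  obtain \<sigma> \<tau> where st: "0 < \<sigma>" "\<sigma> < t" "0 < \<tau>" "\<tau> < t" and
    E1: "L (f (z + t *\<^sub>R axis a 1 + t *\<^sub>R axis b 1)) - L (f (z + t *\<^sub>R axis a 1))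
      - L (f (z + t *\<^sub>R axis b 1)) + L (f z)
    = t * t * X (z + \<sigma> *\<^sub>R axis a 1 + \<tau> *\<^sub>R axis b 1)"
    using key[OF sm L t, of z a b] unfolding X_def by blast
  obtain \<sigma>' \<tau>' where st': "0 < \<sigma>'" "\<sigma>' < t" "0 < \<tau>'" "\<tau>' < t" and
    E2: "L (f (z + t *\<^sub>R axis b 1 + t *\<^sub>R axis a 1)) - L (f (z + t *\<^sub>R axis b 1))
      - L (f (z + t *\<^sub>R axis a 1)) + L (f z)
    = t * t * Y (z + \<sigma>' *\<^sub>R axis b 1 + \<tau>' *\<^sub>R axis a 1)"
    using key[OF sm L t, of z b a] unfolding Y_def by blast
  have "z + t *\<^sub>R axis b 1 + t *\<^sub>R axis a 1 = z + t *\<^sub>R axis a 1 + t *\<^sub>R axis b 1"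
    by (simp add: algebra_simps)
  then have "t * t * X (z + \<sigma> *\<^sub>R axis a 1 + \<tau> *\<^sub>R axis b 1) = t * t * Y (z + \<sigma>' *\<^sub>R axis b 1 + \<tau>' *\<^sub>R axis a 1)"
    unfolding E1[symmetric] E2[symmetric] by (simp only: \<open>z + t *\<^sub>R axis b 1 + t *\<^sub>R axis a 1 = z + t *\<^sub>R axis a 1 + t *\<^sub>R axis b 1\<close>)
  then have XY: "X (z + \<sigma> *\<^sub>R axis a 1 + \<tau> *\<^sub>R axis b 1) = Y (z + \<sigma>' *\<^sub>R axis b 1 + \<tau>' *\<^sub>R axis a 1)"
    using t by simp
  have nrm: "dist (z + p *\<^sub>R axis c 1 + q *\<^sub>R axis d 1) z < min d1 d2"
    if "0 < p" "p < t" "0 < q" "q < t" for p q :: real and c d :: "'n + 'n"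
  proof -
    have "dist (z + p *\<^sub>R axis c 1 + q *\<^sub>R axis d 1) z = norm (p *\<^sub>R axis c (1::real) + q *\<^sub>R axis d (1::real))"
      by (simp add: dist_norm)
    also have "\<dots> \<le> norm (p *\<^sub>R axis c (1::real)) + norm (q *\<^sub>R axis d (1::real))"
      by (rule norm_triangle_ineq)
    also have "\<dots> = p + q" using that by simp
    also have "\<dots> < min d1 d2" using that unfolding t_def by simp
    finally show ?thesis .
  qed
  have "dist (X (z + \<sigma> *\<^sub>R axis a 1 + \<tau> *\<^sub>R axis b 1)) (X z) < e"
    using d1(2) nrm[OF st] by simp
  moreover have "dist (Y (z + \<sigma>' *\<^sub>R axis b 1 + \<tau>' *\<^sub>R axis a 1)) (Y z) < e"
    using d2(2) nrm[OF st'] by simp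
  ultimately have "\<bar>X z - Y z\<bar> < 2 * e" using XY unfolding dist_real_def by linarith
  then show False unfolding e_def by simp
qed

lemma pd_swap:
  fixes f :: "'n::finite sym"
  assumes sm: "smooth_sym f"
  shows "pd b (pd a f) = pd a (pd b f)"
proof
  fix z
  show "pd b (pd a f) z = pd a (pd b f) z"
    using pd_swap_L[OF sm bounded_linear_Re, of b a z] pd_swap_L[OF sm bounded_linear_Im, of b a z]
    by (simp add: complex_eq_iff)
qed

lemma pds_pd_comm: "smooth_sym f \<Longrightarrow> pds l (pd m f) = pd m (pds l f)"
proof (induction l)
  case Nil then show ?case by (simp add: pds_Nil)
next
  case (Cons a l)
  then show ?case by (simp add: pds_Cons pd_swap smooth_pds)
qed

lemma pds_perm: "smooth_sym f \<Longrightarrow> mset xs = mset ys \<Longrightarrow> pds xs f = pds ys f"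
proof (induction xs arbitrary: ys)
  case Nil then show ?case by simp
next
  case (Cons x xs)
  then have "x \<in> set ys" by (metis list.set_intros(1) set_mset_mset)
  then obtain ys1 ys2 where ys: "ys = ys1 @ x # ys2" by (meson split_list)
  have "pds ys f = pds ys1 (pd x (pds ys2 f))" by (simp add: ys pds_append pds_Cons)
  also have "\<dots> = pd x (pds ys1 (pds ys2 f))"
    using Cons.prems by (simp add: pds_pd_comm smooth_pds)
  also have "\<dots> = pd x (pds (ys1 @ ys2) f)" by (simp add: pds_append)
  also have "pds (ys1 @ ys2) f = pds xs f"
    using Cons.prems Cons.IH[of "ys1 @ ys2"] ys by simp
  finally show ?case by (simp add: pds_Cons)
qed



definition lists_of :: "'a set \<Rightarrow> nat \<Rightarrow> 'a list set" where
  "lists_of A K = {xs. length xs = K \<and> set xs \<subseteq> A}"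

lemma lists_of_0[simp]: "lists_of A 0 = {[]}"
  unfolding lists_of_def by auto

lemma lists_of_Suc: "lists_of A (Suc K) = (\<lambda>(a, x). a # x) ` (A \<times> lists_of A K)"
  unfolding lists_of_def by (auto simp: length_Suc_conv image_iff)

lemma finite_lists_of: "finite A \<Longrightarrow> finite (lists_of A K)"
  unfolding lists_of_def using finite_lists_length_eq[of A K] by (simp add: conj_commute)

lemma sum_lists_Suc: "(\<Sum>x\<in>lists_of A (Suc K). F x) = (\<Sum>a\<in>A. \<Sum>x\<in>lists_of A K. F (a # x))"
proof -
  have inj: "inj_on (\<lambda>(a, x). a # x) (A \<times> lists_of A K)"
    by (auto simp: inj_on_def)
  have "(\<Sum>x\<in>lists_of A (Suc K). F x) = (\<Sum>p\<in>A \<times> lists_of A K. F ((\<lambda>(a, x). a # x) p))"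
    unfolding lists_of_Suc by (rule sum.reindex[OF inj, unfolded comp_def])
  also have "\<dots> = (\<Sum>a\<in>A. \<Sum>x\<in>lists_of A K. F (a # x))"
    by (simp add: sum.cartesian_product split_def)
  finally show ?thesis .
qed

lemma sum_lists_zip:
  "(\<Sum>x\<in>lists_of A K. \<Sum>y\<in>lists_of B K. F (zip x y)) = (\<Sum>q\<in>lists_of (A \<times> B) K. F q)"
proof (induction K arbitrary: F)
  case 0 then show ?case by simp
next
  case (Suc K)
  have "(\<Sum>x\<in>lists_of A (Suc K). \<Sum>y\<in>lists_of B (Suc K). F (zip x y))
      = (\<Sum>a\<in>A. \<Sum>x\<in>lists_of A K. \<Sum>b\<in>B. \<Sum>y\<in>lists_of B K. F ((a, b) # zip x y))"
    by (simp add: sum_lists_Suc)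
  also have "\<dots> = (\<Sum>a\<in>A. \<Sum>b\<in>B. \<Sum>x\<in>lists_of A K. \<Sum>y\<in>lists_of B K. F ((a, b) # zip x y))"
    by (rule sum.cong[OF refl], rule sum.swap)
  also have "\<dots> = (\<Sum>a\<in>A. \<Sum>b\<in>B. \<Sum>q\<in>lists_of (A \<times> B) K. F ((a, b) # q))"
  proof (intro sum.cong refl)
    fix a b
    show "(\<Sum>x\<in>lists_of A K. \<Sum>y\<in>lists_of B K. F ((a, b) # zip x y))
       = (\<Sum>q\<in>lists_of (A \<times> B) K. F ((a, b) # q))"
      by (rule Suc.IH[of "\<lambda>q. F ((a, b) # q)"])
  qed
  also have "\<dots> = (\<Sum>p\<in>A \<times> B. \<Sum>q\<in>lists_of (A \<times> B) K. F (p # q))"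
    by (rule sum.cartesian_product'[symmetric])
  also have "\<dots> = (\<Sum>q\<in>lists_of (A \<times> B) (Suc K). F q)"
    by (simp add: sum_lists_Suc)
  finally show ?case .
qed

lemma sum_lists_bij:
  assumes "bij_betw \<phi> X Y"
  shows "(\<Sum>x\<in>lists_of Y K. F x) = (\<Sum>x\<in>lists_of X K. F (map \<phi> x))"
proof (induction K arbitrary: F)
  case 0 then show ?case by simp
next
  case (Suc K)
  have "(\<Sum>x\<in>lists_of Y (Suc K). F x) = (\<Sum>b\<in>Y. \<Sum>x\<in>lists_of X K. F (b # map \<phi> x))"
    by (simp add: sum_lists_Suc Suc.IH)
  also have "\<dots> = (\<Sum>a\<in>X. \<Sum>x\<in>lists_of X K. F (\<phi> a # map \<phi> x))"
    by (rule sum.reindex_bij_betw[OF assms, symmetric])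
  also have "\<dots> = (\<Sum>x\<in>lists_of X (Suc K). F (map \<phi> x))"
    by (simp add: sum_lists_Suc)
  finally show ?case .
qed

lemma bij_PiE_lists: "bij_betw (\<lambda>f. map f [1..<K+1]) ({1..K} \<rightarrow>\<^sub>E A) (lists_of A K)"
proof (rule bij_betwI')
  fix f g assume f: "f \<in> {1..K} \<rightarrow>\<^sub>E A" and g: "g \<in> {1..K} \<rightarrow>\<^sub>E A"
  show "(map f [1..<K+1] = map g [1..<K+1]) = (f = g)"
  proof
    assume "map f [1..<K+1] = map g [1..<K+1]"
    then have "\<forall>i\<in>set [1..<K+1]. f i = g i" by (simp only: map_eq_conv)
    then show "f = g" using f g by (intro PiE_ext) auto
  qed simp
next
  fix f assume "f \<in> {1..K} \<rightarrow>\<^sub>E A"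
  then show "map f [1..<K+1] \<in> lists_of A K" unfolding lists_of_def by auto
next
  fix x assume x: "x \<in> lists_of A K"
  define f where "f = restrict (\<lambda>e. x ! (e - 1)) {1..K}"
  have "f \<in> {1..K} \<rightarrow>\<^sub>E A"
    using x unfolding f_def lists_of_def by (auto intro!: nth_mem[THEN subsetD[rotated]])
  moreover have "x = map f [1..<K+1]"
    using x unfolding f_def lists_of_def by (intro nth_equalityI) (auto simp del: upt_Suc simp add: nth_map_upt)
  ultimately show "\<exists>f\<in>{1..K} \<rightarrow>\<^sub>E A. x = map f [1..<K+1]" by blast
qed

lemma sum_PiE_lists: "(\<Sum>f\<in>{1..K} \<rightarrow>\<^sub>E A. F (map f [1..<K+1])) = (\<Sum>x\<in>lists_of A K. F x)"
  by (rule sum.reindex_bij_betw[OF bij_PiE_lists])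

lemma sum_PiE2_lists:
  "(\<Sum>mu\<in>{1..K} \<rightarrow>\<^sub>E A. \<Sum>nu\<in>{1..K} \<rightarrow>\<^sub>E B. F (map (\<lambda>e. (mu e, nu e)) [1..<K+1]))
   = (\<Sum>q\<in>lists_of (A \<times> B) K. F q)"
proof -
  have eq: "map (\<lambda>e. (mu e, nu e)) [1..<K+1] = zip (map mu [1..<K+1]) (map nu [1..<K+1])" for mu nu :: "nat \<Rightarrow> _"
    by (simp add: zip_map_map zip_same_conv_map)
  have "(\<Sum>mu\<in>{1..K} \<rightarrow>\<^sub>E A. \<Sum>nu\<in>{1..K} \<rightarrow>\<^sub>E B. F (map (\<lambda>e. (mu e, nu e)) [1..<K+1]))
     = (\<Sum>mu\<in>{1..K} \<rightarrow>\<^sub>E A. \<Sum>nu\<in>{1..K} \<rightarrow>\<^sub>E B. F (zip (map mu [1..<K+1]) (map nu [1..<K+1])))"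
    by (simp only: eq)
  also have "\<dots> = (\<Sum>mu\<in>{1..K} \<rightarrow>\<^sub>E A. \<Sum>y\<in>lists_of B K. F (zip (map mu [1..<K+1]) y))"
  proof (intro sum.cong refl)
    fix mu :: "nat \<Rightarrow> _"
    show "(\<Sum>nu\<in>{1..K} \<rightarrow>\<^sub>E B. F (zip (map mu [1..<K+1]) (map nu [1..<K+1])))
      = (\<Sum>y\<in>lists_of B K. F (zip (map mu [1..<K+1]) y))"
      by (rule sum_PiE_lists[where F = "\<lambda>y. F (zip (map mu [1..<K+1]) y)"])
  qed
  also have "\<dots> = (\<Sum>x\<in>lists_of A K. \<Sum>y\<in>lists_of B K. F (zip x y))"
    by (rule sum_PiE_lists[where F = "\<lambda>x. \<Sum>y\<in>lists_of B K. F (zip x y)"])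
  also have "\<dots> = (\<Sum>q\<in>lists_of (A \<times> B) K. F q)" by (rule sum_lists_zip)
  finally show ?thesis .
qed

definition sel :: "'v \<Rightarrow> 'm list \<Rightarrow> 'v list \<Rightarrow> 'm list" where
  "sel v l g = map fst (filter (\<lambda>p. snd p = v) (zip l g))"

lemma sel_Nil[simp]: "sel v [] g = []"
  by (simp add: sel_def)

lemma sel_Cons[simp]: "sel v (m # l) (w # g) = (if w = v then m # sel v l g else sel v l g)"
  by (simp add: sel_def)

lemma pds_prod:
  fixes F :: "'v \<Rightarrow> 'n::finite sym"
  assumes V: "finite V" and sm: "\<And>v. v \<in> V \<Longrightarrow> smooth_sym (F v)"
  shows "pds l (\<lambda>z. \<Prod>v\<in>V. F v z)
    = (\<lambda>z. \<Sum>g\<in>lists_of V (length l). \<Prod>v\<in>V. pds (sel v l g) (F v) z)"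
proof (induction l)
  case Nil then show ?case by (simp add: pds_Nil)
next
  case (Cons m l)
  let ?H = "\<lambda>g v. pds (sel v l g) (F v)"
  have smH: "smooth_sym (\<lambda>z. \<Prod>v\<in>V. ?H g v z)" for g
    using V sm by (intro smooth_prod smooth_pds) auto
  have fin: "finite (lists_of V (length l))" using V by (rule finite_lists_of)
  have "pds (m # l) (\<lambda>z. \<Prod>v\<in>V. F v z) = pds [m] (\<lambda>z. \<Sum>g\<in>lists_of V (length l). \<Prod>v\<in>V. ?H g v z)"
    using Cons.IH by (simp add: pds_Cons pds_Nil)
  also have "\<dots> = (\<lambda>z. \<Sum>g\<in>lists_of V (length l). pd m (\<lambda>z. \<Prod>v\<in>V. ?H g v z) z)"
    using pds_sum[OF fin smH, of "[m]"] by (simp add: pds_Cons pds_Nil)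
  also have "\<dots> = (\<lambda>z. \<Sum>g\<in>lists_of V (length l). \<Sum>w\<in>V. \<Prod>v\<in>V.
       (if v = w then pd m (?H g v) z else ?H g v z))"
    using V sm by (intro ext sum.cong refl pd_prod smooth_diff smooth_pds) auto
  also have "\<dots> = (\<lambda>z. \<Sum>g\<in>lists_of V (length l). \<Sum>w\<in>V. \<Prod>v\<in>V. pds (sel v (m # l) (w # g)) (F v) z)"
    by (intro ext sum.cong refl prod.cong) (auto simp: pds_Cons)
  also have "\<dots> = (\<lambda>z. \<Sum>w\<in>V. \<Sum>g\<in>lists_of V (length l). \<Prod>v\<in>V. pds (sel v (m # l) (w # g)) (F v) z)"
    by (intro ext sum.swap)
  also have "\<dots> = (\<lambda>z. \<Sum>g\<in>lists_of V (length (m # l)). \<Prod>v\<in>V. pds (sel v (m # l) g) (F v) z)"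
    by (simp add: sum_lists_Suc)
  finally show ?case .
qed

lemma pascal_sum:
  fixes S :: "nat \<Rightarrow> nat \<Rightarrow> 'b::comm_ring_1"
  shows "(\<Sum>k\<le>Suc K. of_nat (Suc K choose k) * S (Suc K - k) k)
    = (\<Sum>k\<le>K. of_nat (K choose k) * (S (Suc K - k) k + S (K - k) (Suc k)))"
proof -
  have A: "(\<Sum>k\<le>Suc K. of_nat (Suc K choose k) * S (Suc K - k) k)
      = S (Suc K) 0 + (\<Sum>k\<le>K. of_nat (K choose k) * S (K - k) (Suc k))
        + (\<Sum>k\<le>K. of_nat (K choose Suc k) * S (K - k) (Suc k))"
    unfolding sum.atMost_Suc_shift by (simp add: distrib_right sum.distrib del: sum.atMost_Suc)
  have B: "(\<Sum>k\<le>Suc K. of_nat (K choose k) * S (Suc K - k) k)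
      = S (Suc K) 0 + (\<Sum>k\<le>K. of_nat (K choose Suc k) * S (K - k) (Suc k))"
    unfolding sum.atMost_Suc_shift by (simp del: sum.atMost_Suc)
  have C: "(\<Sum>k\<le>Suc K. of_nat (K choose k) * S (Suc K - k) k)
      = (\<Sum>k\<le>K. of_nat (K choose k) * S (Suc K - k) k)"
    by (simp add: sum.atMost_Suc binomial_eq_0)
  have R: "(\<Sum>k\<le>K. of_nat (K choose k) * (S (Suc K - k) k + S (K - k) (Suc k)))
     = (\<Sum>k\<le>K. of_nat (K choose k) * S (Suc K - k) k) + (\<Sum>k\<le>K. of_nat (K choose k) * S (K - k) (Suc k))"
    by (simp only: distrib_left sum.distrib)
  show ?thesis unfolding R C[symmetric] B A by (simp only: ac_simps)
qed

lemma binom_split: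
  fixes T :: "'a list \<Rightarrow> 'b::comm_ring_1"
  assumes fin: "finite A" and AB: "A = B \<union> D" "B \<inter> D = {}"
    and perm: "\<And>xs ys. mset xs = mset ys \<Longrightarrow> T xs = T ys"
  shows "(\<Sum>x\<in>lists_of A K. T x)
    = (\<Sum>k\<le>K. of_nat (K choose k) * (\<Sum>y\<in>lists_of B (K - k). \<Sum>w\<in>lists_of D k. T (y @ w)))"
  using perm
proof (induction K arbitrary: T)
  case 0 show ?case by simp
next
  case (Suc K)
  define S where "S p q = (\<Sum>y\<in>lists_of B p. \<Sum>w\<in>lists_of D q. T (y @ w))" for p q
  have IH: "(\<Sum>x\<in>lists_of A K. T (a # x))
     = (\<Sum>k\<le>K. of_nat (K choose k) * (\<Sum>y\<in>lists_of B (K - k). \<Sum>w\<in>lists_of D k. T (a # y @ w)))" for a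
  proof -
    have "mset xs = mset ys \<Longrightarrow> T (a # xs) = T (a # ys)" for xs ys
      by (rule Suc.prems) simp
    from Suc.IH[of "\<lambda>x. T (a # x)", OF this] show ?thesis by simp
  qed
  have finB: "finite B" "finite D" using fin AB by auto
  have "(\<Sum>x\<in>lists_of A (Suc K). T x) = (\<Sum>a\<in>A. \<Sum>x\<in>lists_of A K. T (a # x))"
    by (rule sum_lists_Suc)
  also have "\<dots> = (\<Sum>a\<in>B. \<Sum>x\<in>lists_of A K. T (a # x)) + (\<Sum>a\<in>D. \<Sum>x\<in>lists_of A K. T (a # x))"
    unfolding AB(1) using finB AB(2) by (rule sum.union_disjoint)
  also have "\<dots> = (\<Sum>k\<le>K. of_nat (K choose k) * (S (Suc K - k) k + S (K - k) (Suc k)))"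
  proof -
    have 1: "(\<Sum>a\<in>B. \<Sum>y\<in>lists_of B (K - k). \<Sum>w\<in>lists_of D k. T (a # y @ w)) = S (Suc K - k) k"
      if "k \<le> K" for k
    proof -
      have "Suc K - k = Suc (K - k)" using that by simp
      then show ?thesis unfolding S_def by (simp add: sum_lists_Suc)
    qed
    have 2: "(\<Sum>a\<in>D. \<Sum>y\<in>lists_of B (K - k). \<Sum>w\<in>lists_of D k. T (a # y @ w)) = S (K - k) (Suc k)"
      for k
    proof -
      have "(\<Sum>a\<in>D. \<Sum>y\<in>lists_of B (K - k). \<Sum>w\<in>lists_of D k. T (a # y @ w))
          = (\<Sum>y\<in>lists_of B (K - k). \<Sum>a\<in>D. \<Sum>w\<in>lists_of D k. T (y @ a # w))"
        by (subst sum.swap) (intro sum.cong refl Suc.prems, simp)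
      then show ?thesis unfolding S_def by (simp add: sum_lists_Suc)
    qed
    have 3: "(\<Sum>a\<in>B. \<Sum>x\<in>lists_of A K. T (a # x)) = (\<Sum>k\<le>K. of_nat (K choose k) * S (Suc K - k) k)"
      unfolding IH
      by (subst sum.swap) (auto simp: sum_distrib_left[symmetric] 1 intro!: sum.cong)
    have 4: "(\<Sum>a\<in>D. \<Sum>x\<in>lists_of A K. T (a # x)) = (\<Sum>k\<le>K. of_nat (K choose k) * S (K - k) (Suc k))"
      unfolding IH
      by (subst sum.swap) (auto simp: sum_distrib_left[symmetric] 2 intro!: sum.cong)
    show ?thesis unfolding 3 4 by (simp only: distrib_left sum.distrib)
  qed
  also have "\<dots> = (\<Sum>k\<le>Suc K. of_nat (Suc K choose k) * S (Suc K - k) k)"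
    by (rule pascal_sum[symmetric])
  finally show ?case unfolding S_def .
qed



definition pairs :: "nat \<Rightarrow> nat set set" where
  "pairs V = {A. A \<subseteq> {1..V} \<and> card A = 2}"

definition Cp :: "nat \<Rightarrow> nat set set" where
  "Cp n = {P \<in> pairs (Suc n). Suc n \<in> P}"

definition Jl :: "('p \<times> ('a + 'a) \<times> ('a + 'a)) list \<Rightarrow> complex" where
  "Jl x = prod_list (map (\<lambda>(P, m, m'). Jm m m') x)"

definition Jp :: "(('a + 'a) \<times> ('a + 'a)) list \<Rightarrow> complex" where
  "Jp ps = prod_list (map (\<lambda>(m, m'). Jm m m') ps)"

definition idxs :: "nat \<Rightarrow> (nat set \<times> 'a \<times> 'a) list \<Rightarrow> 'a list" where
  "idxs v x = concat (map (\<lambda>(P, m, m'). (if Min P = v then [m] else []) @ (if Max P = v then [m'] else [])) x)"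

definition Tm :: "nat \<Rightarrow> (nat \<Rightarrow> 'n::finite sym) \<Rightarrow> (nat set \<times> ('n + 'n) \<times> ('n + 'n)) list \<Rightarrow> 'n sym" where
  "Tm V C x = (\<lambda>z. Jl x * (\<Prod>v\<in>{1..V}. pds (idxs v x) (C v) z))"

definition Gs :: "nat \<Rightarrow> (nat \<Rightarrow> 'n::finite sym) \<Rightarrow> nat \<Rightarrow> 'n sym" where
  "Gs V C K = (\<lambda>z. \<Sum>x\<in>lists_of (pairs V \<times> UNIV) K. Tm V C x z)"

lemma finite_pairs: "finite (pairs V)"
  unfolding pairs_def by (rule finite_subset[of _ "Pow {1..V}"]) auto

lemma pairs_prop: "P \<in> pairs V \<Longrightarrow> finite P \<and> P \<noteq> {} \<and> P \<subseteq> {1..V}"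
  unfolding pairs_def by (auto intro: card_ge_0_finite)

lemma Jl_append[simp]: "Jl (x @ y) = Jl x * Jl y"
  by (simp add: Jl_def)

lemma idxs_append[simp]: "idxs v (x @ y) = idxs v x @ idxs v y"
  by (simp add: idxs_def)

lemma idxs_Nil[simp]: "idxs v [] = []" by (simp add: idxs_def)
lemma Jl_Nil[simp]: "Jl [] = 1" by (simp add: Jl_def)

lemma smooth_Tm:
  assumes "\<And>v. v \<in> {1..V} \<Longrightarrow> smooth_sym (C v)"
  shows "smooth_sym (Tm V C x)"
  unfolding Tm_def using assms by (intro smooth_cmult smooth_prod smooth_pds) auto

lemma smooth_Gs:
  assumes "\<And>v. v \<in> {1..V} \<Longrightarrow> smooth_sym (C v)"
  shows "smooth_sym (Gs V C K)"
  unfolding Gs_def using assms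
  by (intro smooth_sum smooth_Tm finite_lists_of finite_SigmaI finite_pairs) auto

lemma mset_concat_map: "mset (concat (map h x)) = sum_mset (image_mset (\<lambda>a. mset (h a)) (mset x))"
  by (induction x) auto

lemma Tm_perm:
  assumes "\<And>v. v \<in> {1..V} \<Longrightarrow> smooth_sym (C v)" and "mset x = mset y"
  shows "Tm V C x = Tm V C y"
proof -
  have "Jl x = Jl y"
    unfolding Jl_def prod_mset_prod_list[symmetric] mset_map using assms(2) by simp
  moreover have "pds (idxs v x) (C v) = pds (idxs v y) (C v)" if "v \<in> {1..V}" for v
    using assms that unfolding idxs_def by (intro pds_perm) (simp_all add: mset_concat_map)
  ultimately show ?thesis unfolding Tm_def by simp
qed

lemma G_eq:
  fixes C :: "nat \<Rightarrow> 'n::finite sym"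
  shows "(\<Sum>s\<in>graphs V K. lambda_graph V K s C z) = Gs V C K z"
proof -
  let ?l = "[1..<K+1]"
  let ?H = "\<lambda>x. Tm V C x z"
  have summ: "lambda_graph V K s C z
     = (\<Sum>mu\<in>{1..K} \<rightarrow>\<^sub>E UNIV. \<Sum>nu\<in>{1..K} \<rightarrow>\<^sub>E UNIV. ?H (zip (map s ?l) (map (\<lambda>e. (mu e, nu e)) ?l)))" for s
  proof -
    have "(\<Prod>e\<in>{1..K}. Jm (mu e) (nu e)) = Jl (zip (map s ?l) (map (\<lambda>e. (mu e, nu e)) ?l))"
      for mu nu :: "nat \<Rightarrow> 'n + 'n"
    proof -
      have "(\<Prod>e\<in>{1..K}. Jm (mu e) (nu e)) = (\<Prod>e\<in>set ?l. Jm (mu e) (nu e))"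
        by (intro prod.cong) auto
      also have "\<dots> = prod_list (map (\<lambda>e. Jm (mu e) (nu e)) ?l)"
        by (rule prod.distinct_set_conv_list) simp
      finally show ?thesis unfolding Jl_def by (simp add: zip_map_map zip_same_conv_map o_def)
    qed
    moreover have "vertex_indices K s mu nu v = idxs v (zip (map s ?l) (map (\<lambda>e. (mu e, nu e)) ?l))"
      for mu nu :: "nat \<Rightarrow> 'n + 'n" and v
      unfolding vertex_indices_def idxs_def by (simp add: zip_map_map zip_same_conv_map o_def)
    ultimately show ?thesis unfolding lambda_graph_def Tm_def by simp
  qed
  have "(\<Sum>s\<in>graphs V K. lambda_graph V K s C z)
      = (\<Sum>s\<in>{1..K} \<rightarrow>\<^sub>E pairs V. \<Sum>q\<in>lists_of (UNIV \<times> UNIV) K. ?H (zip (map s ?l) q))"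
    unfolding graphs_def summ pairs_def[symmetric]
  proof (intro sum.cong refl)
    fix s :: "nat \<Rightarrow> nat set"
    show "(\<Sum>mu\<in>{1..K} \<rightarrow>\<^sub>E UNIV. \<Sum>nu\<in>{1..K} \<rightarrow>\<^sub>E UNIV. ?H (zip (map s ?l) (map (\<lambda>e. (mu e, nu e)) ?l)))
      = (\<Sum>q\<in>lists_of (UNIV \<times> UNIV) K. ?H (zip (map s ?l) q))"
      by (rule sum_PiE2_lists[where F = "\<lambda>q. ?H (zip (map s ?l) q)"])
  qed
  also have "\<dots> = (\<Sum>xs\<in>lists_of (pairs V) K. \<Sum>q\<in>lists_of (UNIV \<times> UNIV) K. ?H (zip xs q))"
    by (rule sum_PiE_lists[where F = "\<lambda>xs. \<Sum>q\<in>lists_of (UNIV \<times> UNIV) K. ?H (zip xs q)"])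
  also have "\<dots> = (\<Sum>r\<in>lists_of (pairs V \<times> (UNIV \<times> UNIV)) K. ?H r)"
    by (rule sum_lists_zip)
  finally show ?thesis unfolding Gs_def by simp
qed



definition phi :: "nat \<Rightarrow> nat \<times> ('a \<times> 'a) \<Rightarrow> nat set \<times> 'a \<times> 'a" where
  "phi n = (\<lambda>(v, mm). ({v, Suc n}, mm))"

lemma bij_phi: "bij_betw (phi n) ({1..n} \<times> UNIV) (Cp n \<times> UNIV)"
proof (rule bij_betwI')
  fix x y :: "nat \<times> ('a \<times> 'a)"
  assume "x \<in> {1..n} \<times> UNIV" "y \<in> {1..n} \<times> UNIV"
  then show "(phi n x = phi n y) = (x = y)"
    unfolding phi_def by (cases x, cases y) (auto simp: doubleton_eq_iff)
next
  fix x :: "nat \<times> ('a \<times> 'a)"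
  assume "x \<in> {1..n} \<times> UNIV"
  then show "phi n x \<in> Cp n \<times> UNIV"
    unfolding phi_def Cp_def pairs_def by (cases x) auto
next
  fix y :: "nat set \<times> ('a \<times> 'a)"
  assume y: "y \<in> Cp n \<times> UNIV"
  obtain P mm where yP: "y = (P, mm)" by (cases y)
  have P: "P \<subseteq> {1..Suc n}" "card P = 2" "Suc n \<in> P" using y yP unfolding Cp_def pairs_def by auto
  then obtain a b where ab: "P = {a, b}" "a \<noteq> b" by (auto simp: card_2_iff)
  obtain v where v: "P = {v, Suc n}" "v \<noteq> Suc n"
    using ab P(3) by (metis insert_commute insertE singletonD)
  have "v \<in> {1..n}" using v P(1) by auto
  then show "\<exists>x\<in>{1..n} \<times> UNIV. y = phi n x"
    using v yP unfolding phi_def by (intro bexI[of _ "(v, mm)"]) auto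
qed

lemma Jl_phi: "length g = length ps \<Longrightarrow> Jl (map (phi n) (zip g ps)) = Jp ps"
  by (induction g ps rule: list_induct2) (auto simp: Jl_def Jp_def phi_def)

lemma idxs_phi_low: "length g = length ps \<Longrightarrow> set g \<subseteq> {1..n} \<Longrightarrow> v \<le> n \<Longrightarrow>
  idxs v (map (phi n) (zip g ps)) = sel v (map fst ps) g"
proof (induction g ps rule: list_induct2)
  case Nil then show ?case by simp
next
  case (Cons a g p ps)
  have "Min {a, Suc n} = a" "Max {a, Suc n} = Suc n" using Cons.prems by auto
  then show ?case using Cons by (cases p) (auto simp: idxs_def phi_def)
qed

lemma idxs_phi_top: "length g = length ps \<Longrightarrow> set g \<subseteq> {1..n} \<Longrightarrow>
  idxs (Suc n) (map (phi n) (zip g ps)) = map snd ps"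
proof (induction g ps rule: list_induct2)
  case Nil then show ?case by simp
next
  case (Cons a g p ps)
  have "Min {a, Suc n} = a" "Max {a, Suc n} = Suc n" using Cons.prems by auto
  then show ?case using Cons by (cases p) (auto simp: idxs_def phi_def)
qed

lemma idxs_low_top: "set y \<subseteq> pairs n \<times> UNIV \<Longrightarrow> idxs (Suc n) y = []"
proof (induction y)
  case Nil then show ?case by simp
next
  case (Cons t y)
  obtain P mm where t: "t = (P, mm)" by (cases t)
  have "P \<in> pairs n" using Cons.prems t by auto
  then have "Min P \<in> P" "Max P \<in> P" "P \<subseteq> {1..n}" using pairs_prop[of P n] by auto
  then have "Min P \<noteq> Suc n" "Max P \<noteq> Suc n" by auto
  then show ?case using Cons t by (cases mm) (auto simp: idxs_def)
qed

lemma Tm_split: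
  fixes C :: "nat \<Rightarrow> 'n::finite sym"
  assumes sm: "\<And>v. v \<in> {1..Suc n} \<Longrightarrow> smooth_sym (C v)"
    and y: "set y \<subseteq> pairs n \<times> UNIV" and g: "set g \<subseteq> {1..n}" and len: "length g = length ps"
  shows "Tm (Suc n) C (y @ map (phi n) (zip g ps)) z
    = Jp ps * (Jl y * (\<Prod>v\<in>{1..n}. pds (sel v (map fst ps) g @ idxs v y) (C v) z)) * pds (map snd ps) (C (Suc n)) z"
proof -
  have 1: "pds (idxs v (y @ map (phi n) (zip g ps))) (C v) = pds (sel v (map fst ps) g @ idxs v y) (C v)"
    if "v \<in> {1..n}" for v
    using that g len sm by (auto simp: idxs_phi_low intro!: pds_perm)
  have 2: "idxs (Suc n) (y @ map (phi n) (zip g ps)) = map snd ps"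
    using y g len by (simp add: idxs_low_top idxs_phi_top)
  have "(\<Prod>v\<in>{1..Suc n}. pds (idxs v (y @ map (phi n) (zip g ps))) (C v) z)
     = (\<Prod>v\<in>{1..n}. pds (sel v (map fst ps) g @ idxs v y) (C v) z) * pds (map snd ps) (C (Suc n)) z"
    using 1 2 by simp
  then show ?thesis unfolding Tm_def using len by (simp add: Jl_phi)
qed

lemma bracket_lists:
  fixes G D :: "'n::finite sym"
  shows "bracket k G D z = (\<Sum>ps\<in>lists_of UNIV k. Jp ps * pds (map fst ps) G z * pds (map snd ps) D z)"
proof -
  let ?l = "[1..<k+1]"
  let ?H = "\<lambda>ps. Jp ps * pds (map fst ps) G z * pds (map snd ps) D z"
  have "(\<Prod>e\<in>{1..k}. Jm (mu e) (nu e)) * pds (map mu ?l) G z * pds (map nu ?l) D z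
     = ?H (map (\<lambda>e. (mu e, nu e)) ?l)" for mu nu :: "nat \<Rightarrow> 'n + 'n"
  proof -
    have "(\<Prod>e\<in>{1..k}. Jm (mu e) (nu e)) = (\<Prod>e\<in>set ?l. Jm (mu e) (nu e))"
      by (intro prod.cong) auto
    also have "\<dots> = prod_list (map (\<lambda>e. Jm (mu e) (nu e)) ?l)"
      by (rule prod.distinct_set_conv_list) simp
    finally show ?thesis unfolding Jp_def by (simp add: o_def)
  qed
  then have "bracket k G D z = (\<Sum>mu\<in>{1..k} \<rightarrow>\<^sub>E UNIV. \<Sum>nu\<in>{1..k} \<rightarrow>\<^sub>E UNIV. ?H (map (\<lambda>e. (mu e, nu e)) ?l))"
    unfolding bracket_def by simp
  also have "\<dots> = (\<Sum>ps\<in>lists_of (UNIV \<times> UNIV) k. ?H ps)"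
    by (rule sum_PiE2_lists)
  finally show ?thesis by simp
qed



lemma finite_A: "finite (pairs n \<times> (UNIV :: (('n::finite + 'n) \<times> ('n + 'n)) set))"
  by (intro finite_SigmaI finite_pairs) auto

lemma bracket_step:
  fixes C :: "nat \<Rightarrow> 'n::finite sym"
  assumes sm: "\<And>v. v \<in> {1..Suc n} \<Longrightarrow> smooth_sym (C v)"
  shows "bracket k (Gs n C j) (C (Suc n)) z
    = (\<Sum>y\<in>lists_of (pairs n \<times> UNIV) j. \<Sum>w\<in>lists_of (Cp n \<times> UNIV) k. Tm (Suc n) C (y @ w) z)"
proof -
  let ?Y = "lists_of (pairs n \<times> (UNIV :: (('n + 'n) \<times> ('n + 'n)) set)) j"
  let ?Gk = "lists_of {1..n} k"
  let ?P = "lists_of (UNIV :: (('n + 'n) \<times> ('n + 'n)) set) k"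
  let ?Pi = "\<lambda>ps y g. \<Prod>v\<in>{1..n}. pds (sel v (map fst ps) g @ idxs v y) (C v) z"
  let ?D = "\<lambda>ps. pds (map snd ps) (C (Suc n)) z"
  have smn: "\<And>v. v \<in> {1..n} \<Longrightarrow> smooth_sym (C v)" using sm by auto
  have finY: "finite ?Y" by (intro finite_lists_of finite_A)
  have step2: "pds (map fst ps) (Gs n C j) z = (\<Sum>y\<in>?Y. Jl y * (\<Sum>g\<in>?Gk. ?Pi ps y g))"
    if ps: "ps \<in> ?P" for ps
  proof -
    have "pds (map fst ps) (Gs n C j) = (\<lambda>z. \<Sum>y\<in>?Y. pds (map fst ps) (Tm n C y) z)"
      unfolding Gs_def by (rule pds_sum[OF finY smooth_Tm[OF smn]])
    moreover have "pds (map fst ps) (Tm n C y) z = Jl y * (\<Sum>g\<in>?Gk. ?Pi ps y g)" for y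
    proof -
      have "pds (map fst ps) (Tm n C y) = (\<lambda>z. Jl y * pds (map fst ps) (\<lambda>z. \<Prod>v\<in>{1..n}. pds (idxs v y) (C v) z) z)"
        unfolding Tm_def using smn by (intro pds_cmult smooth_prod smooth_pds) auto
      also have "\<dots> = (\<lambda>z. Jl y * (\<Sum>g\<in>lists_of {1..n} (length (map fst ps)).
            \<Prod>v\<in>{1..n}. pds (sel v (map fst ps) g) (pds (idxs v y) (C v)) z))"
        using smn by (subst pds_prod) (auto intro: smooth_pds)
      finally show ?thesis using ps by (simp add: lists_of_def pds_append)
    qed
    ultimately show ?thesis by simp
  qed
  have "bracket k (Gs n C j) (C (Suc n)) z
      = (\<Sum>ps\<in>?P. Jp ps * (\<Sum>y\<in>?Y. Jl y * (\<Sum>g\<in>?Gk. ?Pi ps y g)) * ?D ps)"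
    unfolding bracket_lists by (intro sum.cong refl) (simp add: step2)
  also have "\<dots> = (\<Sum>ps\<in>?P. \<Sum>y\<in>?Y. \<Sum>g\<in>?Gk. Jp ps * (Jl y * ?Pi ps y g) * ?D ps)"
    by (simp only: sum_distrib_left sum_distrib_right)
  also have "\<dots> = (\<Sum>y\<in>?Y. \<Sum>g\<in>?Gk. \<Sum>ps\<in>?P. Jp ps * (Jl y * ?Pi ps y g) * ?D ps)"
    by (subst sum.swap) (simp only: sum.swap[of _ ?P])
  also have "\<dots> = (\<Sum>y\<in>?Y. \<Sum>g\<in>?Gk. \<Sum>ps\<in>?P. Tm (Suc n) C (y @ map (phi n) (zip g ps)) z)"
  proof (intro sum.cong refl)
    fix y g ps assume "y \<in> ?Y" "g \<in> ?Gk" "ps \<in> ?P"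
    then show "Jp ps * (Jl y * ?Pi ps y g) * ?D ps = Tm (Suc n) C (y @ map (phi n) (zip g ps)) z"
      by (subst Tm_split[OF sm]) (auto simp: lists_of_def)
  qed
  also have "\<dots> = (\<Sum>y\<in>?Y. \<Sum>q\<in>lists_of ({1..n} \<times> UNIV) k. Tm (Suc n) C (y @ map (phi n) q) z)"
  proof (intro sum.cong refl)
    fix y
    show "(\<Sum>g\<in>?Gk. \<Sum>ps\<in>?P. Tm (Suc n) C (y @ map (phi n) (zip g ps)) z)
      = (\<Sum>q\<in>lists_of ({1..n} \<times> UNIV) k. Tm (Suc n) C (y @ map (phi n) q) z)"
      by (rule sum_lists_zip[where F = "\<lambda>q. Tm (Suc n) C (y @ map (phi n) q) z"])
  qed
  also have "\<dots> = (\<Sum>y\<in>?Y. \<Sum>w\<in>lists_of (Cp n \<times> UNIV) k. Tm (Suc n) C (y @ w) z)"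
  proof (intro sum.cong refl)
    fix y
    show "(\<Sum>q\<in>lists_of ({1..n} \<times> UNIV) k. Tm (Suc n) C (y @ map (phi n) q) z)
      = (\<Sum>w\<in>lists_of (Cp n \<times> UNIV) k. Tm (Suc n) C (y @ w) z)"
      by (rule sum_lists_bij[OF bij_phi, symmetric])
  qed
  finally show ?thesis .
qed

lemma coef:
  assumes "k \<le> K"
  shows "(\<i> / 2) ^ k / of_nat (fact k) * ((\<i> / 2) ^ (K - k) / of_nat (fact (K - k)))
    = (\<i> / 2) ^ K / of_nat (fact K) * (of_nat (K choose k) :: complex)"
proof -
  have p: "(\<i> / 2) ^ K = (\<i> / 2) ^ k * ((\<i> / 2) ^ (K - k) :: complex)"
    using assms by (simp add: power_add[symmetric])
  show ?thesis unfolding p binomial_fact[OF assms] of_nat_fact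
    by (simp add: field_simps)
qed

lemma bracket_zero: "bracket k F (\<lambda>z. 0) z = 0"
  unfolding bracket_def by (simp add: pds_const0)

lemma bracket_cmult: "smooth_sym G \<Longrightarrow> bracket k (\<lambda>z. c * G z) D z = c * bracket k G D z"
  unfolding bracket_def by (simp add: pds_cmult sum_distrib_left ac_simps)

lemma pairs_Suc: "pairs (Suc m) = pairs m \<union> Cp m"
  unfolding Cp_def pairs_def by (auto simp: atLeastAtMostSuc_conv)

lemma pairs_1: "pairs (Suc 0) = {}"
proof -
  have "card P \<le> 1" if "P \<subseteq> {1..Suc 0}" for P :: "nat set"
    using card_mono[OF _ that] by simp
  note c = this
  have "P \<notin> pairs (Suc 0)" for P
  proof
    assume "P \<in> pairs (Suc 0)"
    then have "P \<subseteq> {1..Suc 0}" "card P = 2" unfolding pairs_def by auto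
    with c[of P] show False by simp
  qed
  then show ?thesis by auto
qed

lemma main:
  fixes C :: "nat \<Rightarrow> 'n::finite sym"
  assumes "\<And>v. v \<in> {1..Suc n} \<Longrightarrow> smooth_sym (C v)"
  shows "moyal_list (Suc n) C K z = (\<i> / 2) ^ K / of_nat (fact K) * Gs (Suc n) C K z"
  using assms
proof (induction n arbitrary: K z)
  case 0
  show ?case
  proof (cases K)
    case 0
    have "Gs (Suc 0) C 0 z = C 1 z" unfolding Gs_def Tm_def by (simp add: pds_Nil)
    then show ?thesis using 0 by (simp add: const_series_def)
  next
    case (Suc K')
    have "Gs (Suc 0) C K z = 0" unfolding Gs_def Suc lists_of_Suc pairs_1 by simp
    then show ?thesis using Suc by (simp add: const_series_def)
  qed
next
  case (Suc n)
  let ?c = "\<lambda>k. (\<i> / 2) ^ k / of_nat (fact k) :: complex"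
  let ?D = "C (Suc (Suc n))"
  let ?X = "\<lambda>k. (\<Sum>y\<in>lists_of (pairs (Suc n) \<times> UNIV) (K - k).
      \<Sum>w\<in>lists_of (Cp (Suc n) \<times> UNIV) k. Tm (Suc (Suc n)) C (y @ w) z)"
  have sm1: "\<And>v. v \<in> {1..Suc n} \<Longrightarrow> smooth_sym (C v)" using Suc.prems by auto
  have IH: "moyal_list (Suc n) C = (\<lambda>a z. ?c a * Gs (Suc n) C a z)"
    using Suc.IH[OF sm1] by (intro ext) simp
  have smG: "smooth_sym (Gs (Suc n) C a)" for a by (rule smooth_Gs[OF sm1])
  have inner: "(\<Sum>a\<le>K - k. ?c k * bracket k (\<lambda>z. ?c a * Gs (Suc n) C a z) (const_series ?D (K - k - a)) z)
      = ?c k * ?c (K - k) * ?X k" if "k \<le> K" for k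
  proof -
    let ?f = "\<lambda>a. ?c k * bracket k (\<lambda>z. ?c a * Gs (Suc n) C a z) (const_series ?D (K - k - a)) z"
    have "(\<Sum>a\<le>K - k. ?f a) = ?f (K - k) + (\<Sum>a\<in>{..K - k} - {K - k}. ?f a)"
      by (rule sum.remove) auto
    also have "(\<Sum>a\<in>{..K - k} - {K - k}. ?f a) = 0"
      by (intro sum.neutral) (auto simp: const_series_def bracket_zero)
    also have "?f (K - k) = ?c k * (?c (K - k) * bracket k (Gs (Suc n) C (K - k)) ?D z)"
    proof -
      have cs: "const_series ?D (K - k - (K - k)) = ?D" by (simp add: const_series_def)
      show ?thesis by (simp only: cs bracket_cmult[OF smG])
    qed
    also have "bracket k (Gs (Suc n) C (K - k)) ?D z = ?X k"
      by (rule bracket_step[OF Suc.prems])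
    finally show ?thesis by (simp add: ac_simps)
  qed
  have "moyal_list (Suc (Suc n)) C K z
      = (\<Sum>k\<le>K. \<Sum>a\<le>K - k. ?c k * bracket k (\<lambda>z. ?c a * Gs (Suc n) C a z) (const_series ?D (K - k - a)) z)"
    by (simp only: moyal_list.simps moyal_def IH)
  also have "\<dots> = (\<Sum>k\<le>K. ?c k * ?c (K - k) * ?X k)"
    by (intro sum.cong refl inner) auto
  also have "\<dots> = (\<Sum>k\<le>K. ?c K * (of_nat (K choose k) * ?X k))"
  proof (intro sum.cong refl)
    fix k assume "k \<in> {..K}"
    then have h: "?c k * ?c (K - k) = ?c K * of_nat (K choose k)" by (intro coef) simp
    show "?c k * ?c (K - k) * ?X k = ?c K * (of_nat (K choose k) * ?X k)"
      unfolding mult.assoc[symmetric] h by (rule refl)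
  qed
  also have "\<dots> = ?c K * (\<Sum>k\<le>K. of_nat (K choose k) * ?X k)"
    by (simp add: sum_distrib_left)
  also have "(\<Sum>k\<le>K. of_nat (K choose k) * ?X k) = Gs (Suc (Suc n)) C K z"
    unfolding Gs_def
  proof (rule binom_split[symmetric])
    show "finite (pairs (Suc (Suc n)) \<times> (UNIV :: (('n + 'n) \<times> ('n + 'n)) set))" by (rule finite_A)
    show "pairs (Suc (Suc n)) \<times> UNIV = pairs (Suc n) \<times> UNIV \<union> Cp (Suc n) \<times> (UNIV :: (('n + 'n) \<times> ('n + 'n)) set)"
      by (simp add: pairs_Suc Sigma_Un_distrib1)
    show "pairs (Suc n) \<times> UNIV \<inter> Cp (Suc n) \<times> (UNIV :: (('n + 'n) \<times> ('n + 'n)) set) = {}"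
      unfolding Cp_def pairs_def by auto
    show "Tm (Suc (Suc n)) C xs z = Tm (Suc (Suc n)) C ys z" if "mset xs = mset ys" for xs ys
      using Tm_perm[OF Suc.prems that] by simp
  qed
  finally show ?case .
qed

theorem lemma1:
  fixes C :: "nat \<Rightarrow> real ^ ('n::finite + 'n) \<Rightarrow> complex" and n :: nat
  assumes "n \<ge> 1"
    and "\<And>j. j \<in> {1..n} \<Longrightarrow> smooth_sym (C j)"
  shows "\<forall>k z. moyal_list n C k z
           = (\<i> / 2) ^ k / of_nat (fact k) * (\<Sum>s\<in>graphs n k. lambda_graph n k s C z)"
proof (intro allI)
  fix k z
  obtain m where n: "n = Suc m" using assms(1) by (cases n) auto
  show "moyal_list n C k z = (\<i> / 2) ^ k / of_nat (fact k) * (\<Sum>s\<in>graphs n k. lambda_graph n k s C z)"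
    unfolding G_eq n using main[of m C k z] assms(2) n by simp
qed


end
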